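(* Fix $p\in[1,2]$ and let $(X,\|\cdot\|_X)$ be a normed space of Rademacher type $p$. Then for every $n\in\mathbb N$, $\boldsymbol\alpha=(\alpha_1,\dots,\alpha_n)\in(0,1)^n$ and $f:\{-1,1\}^n\to X$, $$\int_{\{-1,1\}^n}\Big\|f(x)-\int f\,d\mu_{\boldsymbol\alpha}\Big\|_X^p\,d\mu_{\boldsymbol\alpha}(x)\le\big(2\pi\,\mathsf T_p(X)\big)^p\sum_{i=1}^n\int_{\{-1,1\}^n}\big\|\partial_i^{\alpha_i}f(x)\big\|_X^p\,d\mu_{\boldsymbol\alpha}(x).$$
   Context: $\mu_\alpha$ is the measure on $\{-1,1\}$ with $\mu_\alpha\{1\}=\alpha$, $\mu_\alpha\{-1\}=1-\alpha$, and $\mu_{\boldsymbol\alpha}=\mu_{\alpha_1}\otimes\cdots\otimes\mu_{\alpha_n}$. $\partial_i^\beta f(x)=f(x)-\beta f(x_1,\dots,x_{i-1},1,x_{i+1},\dots,x_n)-(1-\beta)f(x_1,\dots,x_{i-1},-1,x_{i+1},\dots,x_n)$. $\sigma_n$ is the uniform probability on $\{-1,1\}^n$; $\mathsf T_p(X)$ is the least $T$ such that $\int\|\sum_{i=1}^nx_iv_i\|_X^p\,d\sigma_n(x)\le T^p\sum_i\|v_i\|_X^p$ for all $n$ and $v_1,\dots,v_n\in X$; $X$ has Rademacher type $p$ if $\mathsf T_p(X)<\infty$. *)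

theory Defs
  imports "HOL-Analysis.Analysis"
begin

definition cube :: "nat \<Rightarrow> (nat \<Rightarrow> real) set" where
  "cube n = PiE {..<n} (\<lambda>_. {-1, 1})"

definition mu :: "(nat \<Rightarrow> real) \<Rightarrow> nat \<Rightarrow> (nat \<Rightarrow> real) \<Rightarrow> real" where
  "mu \<alpha> n x = (\<Prod>i<n. if x i = 1 then \<alpha> i else 1 - \<alpha> i)"

definition mu_int :: "(nat \<Rightarrow> real) \<Rightarrow> nat \<Rightarrow> ((nat \<Rightarrow> real) \<Rightarrow> 'a::real_normed_vector) \<Rightarrow> 'a" where
  "mu_int \<alpha> n f = (\<Sum>x\<in>cube n. mu \<alpha> n x *\<^sub>R f x)"

definition partial :: "nat \<Rightarrow> real \<Rightarrow> ((nat \<Rightarrow> real) \<Rightarrow> 'a::real_normed_vector) \<Rightarrow> (nat \<Rightarrow> real) \<Rightarrow> 'a" where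
  "partial i \<beta> f x = f x - \<beta> *\<^sub>R f (x(i := 1)) - (1 - \<beta>) *\<^sub>R f (x(i := -1))"

text \<open>Admissible constants in the Rademacher type p inequality (sigma_n uniform).\<close>
definition rad_type_consts :: "'a::real_normed_vector itself \<Rightarrow> real \<Rightarrow> real set" where
  "rad_type_consts _ p = {T. T \<ge> 0 \<and> (\<forall>n (v :: nat \<Rightarrow> 'a).
      (\<Sum>x\<in>cube n. norm (\<Sum>i<n. x i *\<^sub>R v i) powr p) / 2 ^ n
        \<le> T powr p * (\<Sum>i<n. norm (v i) powr p))}"

definition has_rad_type :: "'a::real_normed_vector itself \<Rightarrow> real \<Rightarrow> bool" where
  "has_rad_type A p \<longleftrightarrow> rad_type_consts A p \<noteq> {}"

definition rad_type_const :: "'a::real_normed_vector itself \<Rightarrow> real \<Rightarrow> real" where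
  "rad_type_const A p = Inf (rad_type_consts A p)"

end

theory Submission
  imports Defs
begin

lemma cube_finite[simp]: "finite (cube n)"
  unfolding cube_def by (simp add: finite_PiE)

lemma cube_val: "x \<in> cube n \<Longrightarrow> i < n \<Longrightarrow> x i = 1 \<or> x i = -1"
  unfolding cube_def by (auto simp: PiE_iff)

lemma cube_out: "x \<in> cube n \<Longrightarrow> \<not> i < n \<Longrightarrow> x i = undefined"
  unfolding cube_def by (auto simp: PiE_iff extensional_def)

lemma cube_card: "card (cube n) = 2 ^ n"
  unfolding cube_def by (auto simp: card_PiE numeral_2_eq_2)

lemma cube_prod_sum:
  fixes F :: "nat \<Rightarrow> real \<Rightarrow> 'b::comm_semiring_1"
  shows "(\<Sum>x\<in>cube n. \<Prod>j<n. F j (x j)) = (\<Prod>j<n. F j 1 + F j (-1))"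
proof -
  have "(\<Prod>j<n. F j 1 + F j (-1)) = (\<Prod>j<n. \<Sum>y\<in>{-1,1}. F j y)" by (simp add: add.commute)
  also have "... = (\<Sum>x\<in>cube n. \<Prod>j<n. F j (x j))"
    unfolding cube_def by (rule prod_sum_PiE) auto
  finally show ?thesis by simp
qed

lemma cube_marginal:
  fixes q :: "nat \<Rightarrow> real \<Rightarrow> real" and g :: "real \<Rightarrow> real"
  assumes "i < n" and "\<forall>j<n. q j 1 + q j (-1) = 1"
  shows "(\<Sum>x\<in>cube n. (\<Prod>j<n. q j (x j)) * g (x i)) = q i 1 * g 1 + q i (-1) * g (-1)"
proof -
  have "(\<Sum>x\<in>cube n. (\<Prod>j<n. q j (x j)) * g (x i)) 
     = (\<Sum>x\<in>cube n. \<Prod>j<n. q j (x j) * (if j = i then g (x j) else 1))"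
    using assms(1) by (simp add: prod.distrib prod.delta')
  also have "... = (\<Prod>j<n. q j 1 * (if j = i then g 1 else 1) + q j (-1) * (if j = i then g (-1) else 1))"
    by (rule cube_prod_sum)
  also have "... = (\<Prod>j<n. if j = i then q i 1 * g 1 + q i (-1) * g (-1) else 1)"
    using assms(2) by (intro prod.cong) auto
  also have "... = q i 1 * g 1 + q i (-1) * g (-1)" using assms(1) by (simp add: prod.delta')
  finally show ?thesis .
qed

lemma cube_total:
  fixes q :: "nat \<Rightarrow> real \<Rightarrow> real"
  assumes "\<forall>j<n. q j 1 + q j (-1) = 1"
  shows "(\<Sum>x\<in>cube n. (\<Prod>j<n. q j (x j))) = 1"
  using assms by (simp add: cube_prod_sum)

lemma powr_convex0: assumes "1 \<le> p" shows "convex_on {0..} (\<lambda>x::real. x powr p)"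
proof (rule convex_on_linorderI)
  fix t x y :: real assume t: "0 < t" "t < 1" and x: "x \<in> {0..}" and y: "y \<in> {0..}" and xy: "x < y"
  show "((1 - t) *\<^sub>R x + t *\<^sub>R y) powr p \<le> (1 - t) * x powr p + t * y powr p"
  proof (cases "x = 0")
    case True
    have "(t * y) powr p = t powr p * y powr p" using t y by (simp add: powr_mult)
    also have "... \<le> t * y powr p"
    proof -
      have "t powr p \<le> t powr 1" using t assms by (intro powr_mono') auto
      then show ?thesis using t by (simp add: mult_right_mono)
    qed
    finally show ?thesis using True by simp
  next
    case False
    then have "x \<in> {0<..}" "y \<in> {0<..}" using x xy by auto
    then show ?thesis using convex_onD[OF powr_convex[OF assms], of t x y] t by auto
  qed
qed (simp add: convex_real_interval)

lemma norm_sum_scaled: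
  fixes u :: "'i \<Rightarrow> 'a::real_normed_vector"
  assumes "\<forall>a\<in>A. 0 \<le> w a"
  shows "norm (\<Sum>a\<in>A. w a *\<^sub>R u a) \<le> (\<Sum>a\<in>A. w a * norm (u a))"
proof -
  have "norm (\<Sum>a\<in>A. w a *\<^sub>R u a) \<le> (\<Sum>a\<in>A. norm (w a *\<^sub>R u a))" by (rule norm_sum)
  also have "... = (\<Sum>a\<in>A. w a * norm (u a))" using assms by (intro sum.cong) auto
  finally show ?thesis .
qed

lemma jensen_norm:
  fixes u :: "'i \<Rightarrow> 'a::real_normed_vector"
  assumes "finite A" "\<forall>a\<in>A. 0 \<le> w a" "sum w A = 1" "1 \<le> p"
  shows "norm (\<Sum>a\<in>A. w a *\<^sub>R u a) powr p \<le> (\<Sum>a\<in>A. w a * norm (u a) powr p)"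
proof -
  have ne: "A \<noteq> {}" using assms(3) by auto
  have "norm (\<Sum>a\<in>A. w a *\<^sub>R u a) powr p \<le> (\<Sum>a\<in>A. w a * norm (u a)) powr p"
    using norm_sum_scaled[OF assms(2)] assms(4) by (intro powr_mono2) auto
  also have "... = (\<Sum>a\<in>A. w a *\<^sub>R norm (u a)) powr p" by simp
  also have "... \<le> (\<Sum>a\<in>A. w a * norm (u a) powr p)"
    by (rule convex_on_sum[OF assms(1) ne powr_convex0[OF assms(4)]]) (use assms in auto)
  finally show ?thesis .
qed

lemma type_ineq:
  assumes "T \<in> rad_type_consts TYPE('a::real_normed_vector) p"
  shows "(\<Sum>x\<in>cube n. norm (\<Sum>i<n. x i *\<^sub>R (v i :: 'a)) powr p) / 2 ^ n \<le> T powr p * (\<Sum>i<n. norm (v i) powr p)"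
  using assms unfolding rad_type_consts_def by blast

definition swp :: "(nat \<Rightarrow> real) \<Rightarrow> (nat \<Rightarrow> real) \<times> (nat \<Rightarrow> real) \<Rightarrow> (nat \<Rightarrow> real) \<times> (nat \<Rightarrow> real)" where
  "swp e z = ((\<lambda>i. if e i = 1 then fst z i else snd z i), (\<lambda>i. if e i = 1 then snd z i else fst z i))"

lemma swp_mem: assumes "z \<in> cube n \<times> cube n" shows "swp e z \<in> cube n \<times> cube n"
proof -
  obtain x y where z: "z = (x,y)" "x \<in> cube n" "y \<in> cube n" using assms by auto
  have "(\<lambda>i. if e i = 1 then x i else y i) \<in> cube n" "(\<lambda>i. if e i = 1 then y i else x i) \<in> cube n"
    using z(2,3) unfolding cube_def PiE_iff extensional_def by auto
  then show ?thesis by (simp add: swp_def z(1) cong: if_cong)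
qed

lemma swp_inv: "swp e (swp e z) = z"
  unfolding swp_def by (cases z) (simp add: fun_eq_iff cong: if_cong)

lemma sum_swp: "(\<Sum>z\<in>cube n \<times> cube n. F z) = (\<Sum>z\<in>cube n \<times> cube n. F (swp e z))"
  by (rule sum.reindex_bij_witness[of _ "swp e" "swp e"]) (auto simp: swp_inv swp_mem)

lemma pair_sum: "(\<Sum>z\<in>A \<times> B. h z) = (\<Sum>x\<in>A. \<Sum>y\<in>B. h (x, y))"
  by (simp add: sum.cartesian_product)

lemma abs_diff_powr: assumes "1 \<le> p"
  shows "\<bar>a - b\<bar> powr p \<le> 2 powr (p - 1) * (\<bar>a\<bar> powr p + \<bar>b::real\<bar> powr p)"
proof -
  have c: "((1 - 1/2) *\<^sub>R \<bar>a\<bar> + (1/2) *\<^sub>R \<bar>b\<bar>) powr p \<le> (1 - 1/2) * \<bar>a\<bar> powr p + (1/2) * \<bar>b\<bar> powr p"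
    by (rule convex_onD[OF powr_convex0[OF assms]]) auto
  have e: "2 * ((1 - 1/2) *\<^sub>R \<bar>a\<bar> + (1/2) *\<^sub>R \<bar>b\<bar>) = \<bar>a\<bar> + \<bar>b\<bar>" by simp
  have "\<bar>a - b\<bar> powr p \<le> (\<bar>a\<bar> + \<bar>b\<bar>) powr p" using assms by (intro powr_mono2) auto
  also have "... = 2 powr p * ((1 - 1/2) *\<^sub>R \<bar>a\<bar> + (1/2) *\<^sub>R \<bar>b\<bar>) powr p"
    by (subst e[symmetric], subst powr_mult) auto
  also have "... \<le> 2 powr p * ((1 - 1/2) * \<bar>a\<bar> powr p + (1/2) * \<bar>b\<bar> powr p)"
    using c by (intro mult_left_mono) auto
  also have "... = 2 powr (p - 1) * (\<bar>a\<bar> powr p + \<bar>b\<bar> powr p)"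
    by (simp add: powr_diff field_simps)
  finally show ?thesis .
qed

lemma symm_type:
  fixes v :: "nat \<Rightarrow> 'a::real_normed_vector"
  assumes p: "1 \<le> p" and T: "T \<in> rad_type_consts TYPE('a) p"
    and q: "\<forall>i<n. q i 1 \<ge> 0 \<and> q i (-1) \<ge> 0 \<and> q i 1 + q i (-1) = 1"
    and Y: "\<forall>i<n. q i 1 * Y i 1 + q i (-1) * Y i (-1) = 0"
  shows "(\<Sum>x\<in>cube n. (\<Prod>i<n. q i (x i)) * norm (\<Sum>i<n. Y i (x i) *\<^sub>R v i) powr p)
    \<le> (2*T) powr p * (\<Sum>i<n. (q i 1 * \<bar>Y i 1\<bar> powr p + q i (-1) * \<bar>Y i (-1)\<bar> powr p) * norm (v i) powr p)"
proof -
  define \<nu> where "\<nu> x = (\<Prod>i<n. q i (x i))" for x :: "nat \<Rightarrow> real"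
  have qs: "\<forall>j<n. q j 1 + q j (-1) = 1" using q by auto
  have \<nu>_nn: "\<nu> x \<ge> 0" if "x \<in> cube n" for x
    unfolding \<nu>_def using that q cube_val by (intro prod_nonneg) (metis lessThan_iff)
  have \<nu>_tot: "(\<Sum>x\<in>cube n. \<nu> x) = 1" unfolding \<nu>_def by (rule cube_total[OF qs])
  have \<nu>_marg: "(\<Sum>x\<in>cube n. \<nu> x * g (x i)) = q i 1 * g 1 + q i (-1) * g (-1)" if "i < n" for i g
    unfolding \<nu>_def by (rule cube_marginal[OF that qs])
  define W where "W z = \<nu> (fst z) * \<nu> (snd z)" for z :: "(nat \<Rightarrow> real) \<times> (nat \<Rightarrow> real)"
  define D where "D z i = Y i (fst z i) - Y i (snd z i)" for z :: "(nat \<Rightarrow> real) \<times> (nat \<Rightarrow> real)" and i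
  define \<Phi> where "\<Phi> z = norm (\<Sum>i<n. D z i *\<^sub>R v i) powr p" for z
  have W_nn: "W z \<ge> 0" if "z \<in> cube n \<times> cube n" for z
    using that \<nu>_nn unfolding W_def by auto
  have step1: "norm (\<Sum>i<n. Y i (x i) *\<^sub>R v i) powr p \<le> (\<Sum>x'\<in>cube n. \<nu> x' * \<Phi> (x, x'))"
    if x: "x \<in> cube n" for x
  proof -
    have "(\<Sum>x'\<in>cube n. \<nu> x' *\<^sub>R (\<Sum>i<n. D (x,x') i *\<^sub>R v i))
        = (\<Sum>x'\<in>cube n. \<Sum>i<n. (\<nu> x' * D (x,x') i) *\<^sub>R v i)"
      by (simp add: scaleR_sum_right)
    also have "... = (\<Sum>i<n. \<Sum>x'\<in>cube n. (\<nu> x' * D (x,x') i) *\<^sub>R v i)"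
      by (rule sum.swap)
    also have "... = (\<Sum>i<n. (\<Sum>x'\<in>cube n. \<nu> x' * D (x,x') i) *\<^sub>R v i)"
      by (simp add: scaleR_sum_left)
    also have "... = (\<Sum>i<n. Y i (x i) *\<^sub>R v i)"
    proof (rule sum.cong)
      fix i assume "i \<in> {..<n}"
      then have i: "i < n" by simp
      have "(\<Sum>x'\<in>cube n. \<nu> x' * D (x,x') i)
          = (\<Sum>x'\<in>cube n. \<nu> x') * Y i (x i) - (\<Sum>x'\<in>cube n. \<nu> x' * Y i (x' i))"
        unfolding D_def by (simp add: sum_subtractf right_diff_distrib sum_distrib_right)
      also have "... = Y i (x i)" using \<nu>_tot \<nu>_marg[OF i, of "Y i"] Y i by simp
      finally show "(\<Sum>x'\<in>cube n. \<nu> x' * D (x,x') i) *\<^sub>R v i = Y i (x i) *\<^sub>R v i" by simp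
    qed simp
    finally have eq: "(\<Sum>i<n. Y i (x i) *\<^sub>R v i) = (\<Sum>x'\<in>cube n. \<nu> x' *\<^sub>R (\<Sum>i<n. D (x,x') i *\<^sub>R v i))" by simp
    show ?thesis unfolding eq \<Phi>_def
      by (rule jensen_norm) (use \<nu>_nn \<nu>_tot p in auto)
  qed
  have "(\<Sum>x\<in>cube n. \<nu> x * norm (\<Sum>i<n. Y i (x i) *\<^sub>R v i) powr p)
      \<le> (\<Sum>x\<in>cube n. \<nu> x * (\<Sum>x'\<in>cube n. \<nu> x' * \<Phi> (x, x')))"
    by (intro sum_mono mult_left_mono step1 \<nu>_nn)
  also have "... = (\<Sum>z\<in>cube n \<times> cube n. W z * \<Phi> z)"
    unfolding pair_sum W_def by (simp add: sum_distrib_left mult.assoc)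
  finally have S1: "(\<Sum>x\<in>cube n. \<nu> x * norm (\<Sum>i<n. Y i (x i) *\<^sub>R v i) powr p)
      \<le> (\<Sum>z\<in>cube n \<times> cube n. W z * \<Phi> z)" .
  define \<Psi> where "\<Psi> e z = norm (\<Sum>i<n. e i *\<^sub>R (D z i *\<^sub>R v i)) powr p" for e z
  have swap_eq: "(\<Sum>z\<in>cube n \<times> cube n. W z * \<Phi> z) = (\<Sum>z\<in>cube n \<times> cube n. W z * \<Psi> e z)"
    if e: "e \<in> cube n" for e
  proof -
    have "(\<Sum>z\<in>cube n \<times> cube n. W z * \<Phi> z) = (\<Sum>z\<in>cube n \<times> cube n. W (swp e z) * \<Phi> (swp e z))"
      by (rule sum_swp)
    also have "... = (\<Sum>z\<in>cube n \<times> cube n. W z * \<Psi> e z)"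
    proof (rule sum.cong)
      fix z assume z: "z \<in> cube n \<times> cube n"
      have "W (swp e z) = (\<Prod>i<n. q i (fst (swp e z) i) * q i (snd (swp e z) i))"
        unfolding W_def \<nu>_def by (simp add: prod.distrib)
      also have "... = (\<Prod>i<n. q i (fst z i) * q i (snd z i))"
        by (intro prod.cong) (auto simp: swp_def)
      also have "... = W z" unfolding W_def \<nu>_def by (simp add: prod.distrib)
      finally have 1: "W (swp e z) = W z" .
      have "(\<Sum>i<n. D (swp e z) i *\<^sub>R v i) = (\<Sum>i<n. e i *\<^sub>R (D z i *\<^sub>R v i))"
      proof (rule sum.cong)
        fix i assume "i \<in> {..<n}"
        then have "e i = 1 \<or> e i = -1" using cube_val[OF e] by auto
        then show "D (swp e z) i *\<^sub>R v i = e i *\<^sub>R (D z i *\<^sub>R v i)"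
          unfolding D_def swp_def by (auto simp: algebra_simps)
      qed simp
      then have 2: "\<Phi> (swp e z) = \<Psi> e z" unfolding \<Phi>_def \<Psi>_def by simp
      show "W (swp e z) * \<Phi> (swp e z) = W z * \<Psi> e z" using 1 2 by simp
    qed simp
    finally show ?thesis .
  qed
  have "(\<Sum>z\<in>cube n \<times> cube n. W z * \<Phi> z) = (\<Sum>e\<in>cube n. \<Sum>z\<in>cube n \<times> cube n. W z * \<Phi> z) / 2 ^ n"
    by (simp add: cube_card)
  also have "... = (\<Sum>e\<in>cube n. \<Sum>z\<in>cube n \<times> cube n. W z * \<Psi> e z) / 2 ^ n"
    using swap_eq by simp
  also have "... = (\<Sum>z\<in>cube n \<times> cube n. \<Sum>e\<in>cube n. W z * \<Psi> e z) / 2 ^ n"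
    by (subst sum.swap) (rule refl)
  also have "... = (\<Sum>z\<in>cube n \<times> cube n. W z * ((\<Sum>e\<in>cube n. \<Psi> e z) / 2 ^ n))"
    by (simp add: sum_distrib_left sum_divide_distrib)
  also have "... \<le> (\<Sum>z\<in>cube n \<times> cube n. W z * (T powr p * (\<Sum>i<n. norm (D z i *\<^sub>R v i) powr p)))"
    unfolding \<Psi>_def by (intro sum_mono mult_left_mono W_nn type_ineq[OF T])
  also have "... = T powr p * (\<Sum>z\<in>cube n \<times> cube n. \<Sum>i<n. norm (v i) powr p * (W z * \<bar>D z i\<bar> powr p))"
    by (simp add: sum_distrib_left powr_mult mult_ac)
  also have "... = T powr p * (\<Sum>i<n. \<Sum>z\<in>cube n \<times> cube n. norm (v i) powr p * (W z * \<bar>D z i\<bar> powr p))"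
    by (subst sum.swap) (rule refl)
  also have "... = T powr p * (\<Sum>i<n. norm (v i) powr p * (\<Sum>z\<in>cube n \<times> cube n. W z * \<bar>D z i\<bar> powr p))"
    by (simp add: sum_distrib_left)
  also have "... \<le> T powr p * (\<Sum>i<n. norm (v i) powr p *
       (2 powr p * (q i 1 * \<bar>Y i 1\<bar> powr p + q i (-1) * \<bar>Y i (-1)\<bar> powr p)))"
  proof (rule mult_left_mono, rule sum_mono)
    fix i assume "i \<in> {..<n}"
    then have i: "i < n" by simp
    have "(\<Sum>z\<in>cube n \<times> cube n. W z * \<bar>D z i\<bar> powr p)
       \<le> (\<Sum>z\<in>cube n \<times> cube n. W z * (2 powr (p - 1) * (\<bar>Y i (fst z i)\<bar> powr p + \<bar>Y i (snd z i)\<bar> powr p)))"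
      unfolding D_def by (intro sum_mono mult_left_mono W_nn abs_diff_powr p)
    also have "... = 2 powr (p - 1) * ((\<Sum>z\<in>cube n \<times> cube n. W z * \<bar>Y i (fst z i)\<bar> powr p)
         + (\<Sum>z\<in>cube n \<times> cube n. W z * \<bar>Y i (snd z i)\<bar> powr p))"
      by (simp add: sum_distrib_left sum.distrib algebra_simps)
    also have "(\<Sum>z\<in>cube n \<times> cube n. W z * \<bar>Y i (fst z i)\<bar> powr p)
        = (\<Sum>x\<in>cube n. \<nu> x * \<bar>Y i (x i)\<bar> powr p) * (\<Sum>x'\<in>cube n. \<nu> x')"
      unfolding pair_sum W_def sum_product by (intro sum.cong refl) (simp add: mult_ac)
    also have "(\<Sum>z\<in>cube n \<times> cube n. W z * \<bar>Y i (snd z i)\<bar> powr p)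
        = (\<Sum>x\<in>cube n. \<nu> x) * (\<Sum>x'\<in>cube n. \<nu> x' * \<bar>Y i (x' i)\<bar> powr p)"
      unfolding pair_sum W_def sum_product by (intro sum.cong refl) (simp add: mult_ac)
    also have "2 powr (p - 1) * ((\<Sum>x\<in>cube n. \<nu> x * \<bar>Y i (x i)\<bar> powr p) * (\<Sum>x'\<in>cube n. \<nu> x')
         + (\<Sum>x\<in>cube n. \<nu> x) * (\<Sum>x'\<in>cube n. \<nu> x' * \<bar>Y i (x' i)\<bar> powr p))
        = 2 powr p * (q i 1 * \<bar>Y i 1\<bar> powr p + q i (-1) * \<bar>Y i (-1)\<bar> powr p)"
      using \<nu>_tot \<nu>_marg[OF i, of "\<lambda>a. \<bar>Y i a\<bar> powr p"] by (simp add: powr_diff)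
    finally show "norm (v i) powr p * (\<Sum>z\<in>cube n \<times> cube n. W z * \<bar>D z i\<bar> powr p)
       \<le> norm (v i) powr p * (2 powr p * (q i 1 * \<bar>Y i 1\<bar> powr p + q i (-1) * \<bar>Y i (-1)\<bar> powr p))"
      by (intro mult_left_mono) auto
  qed simp
  also have "... = (2*T) powr p * (\<Sum>i<n. (q i 1 * \<bar>Y i 1\<bar> powr p + q i (-1) * \<bar>Y i (-1)\<bar> powr p) * norm (v i) powr p)"
  proof -
    have "T \<ge> 0" using T unfolding rad_type_consts_def by auto
    then show ?thesis by (simp add: powr_mult sum_distrib_left mult_ac)
  qed
  finally show ?thesis using S1 unfolding \<nu>_def by simp
qed

lemma minkowski:
  fixes u :: "'k \<Rightarrow> 'x \<Rightarrow> 'a::real_normed_vector"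
  assumes A: "finite A" and K: "finite K" and w: "\<forall>x\<in>A. 0 \<le> w x" and p: "1 \<le> p"
    and c: "\<forall>k\<in>K. 0 < c k" and B: "0 \<le> B"
    and b: "\<forall>k\<in>K. (\<Sum>x\<in>A. w x * norm (u k x) powr p) \<le> c k powr p * B"
  shows "(\<Sum>x\<in>A. w x * norm (\<Sum>k\<in>K. u k x) powr p) \<le> (\<Sum>k\<in>K. c k) powr p * B"
proof (cases "K = {}")
  case True then show ?thesis by simp
next
  case False
  define C where "C = sum c K"
  have C: "C > 0" unfolding C_def using K c False by (intro sum_pos) auto
  have s1: "(\<Sum>k\<in>K. c k / C) = 1" using C by (simp add: sum_divide_distrib[symmetric] C_def)
  have pt: "norm (\<Sum>k\<in>K. u k x) powr p \<le> (\<Sum>k\<in>K. (c k / C) * ((C / c k) powr p * norm (u k x) powr p))" for x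
  proof -
    have "(\<Sum>k\<in>K. u k x) = (\<Sum>k\<in>K. (c k / C) *\<^sub>R ((C / c k) *\<^sub>R u k x))"
      using c C by (intro sum.cong) auto
    then have "norm (\<Sum>k\<in>K. u k x) powr p \<le> (\<Sum>k\<in>K. (c k / C) * norm ((C / c k) *\<^sub>R u k x) powr p)"
      using jensen_norm[of K "\<lambda>k. c k / C" p "\<lambda>k. (C / c k) *\<^sub>R u k x"] K p c C s1
      by (simp add: less_imp_le)
    also have "... = (\<Sum>k\<in>K. (c k / C) * ((C / c k) powr p * norm (u k x) powr p))"
    proof (intro sum.cong refl)
      fix k assume "k \<in> K"
      then have ck: "c k > 0" using c by auto
      have "norm ((C / c k) *\<^sub>R u k x) = (C / c k) * norm (u k x)" using ck C by simp
      moreover have "((C / c k) * norm (u k x)) powr p = (C / c k) powr p * norm (u k x) powr p"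
        using ck C by (metis powr_mult norm_ge_zero less_imp_le divide_pos_pos)
      ultimately have "norm ((C / c k) *\<^sub>R u k x) powr p = (C / c k) powr p * norm (u k x) powr p"
        by simp
      then show "(c k / C) * norm ((C / c k) *\<^sub>R u k x) powr p = (c k / C) * ((C / c k) powr p * norm (u k x) powr p)"
        by simp
    qed
    finally show ?thesis .
  qed
  have "(\<Sum>x\<in>A. w x * norm (\<Sum>k\<in>K. u k x) powr p)
      \<le> (\<Sum>x\<in>A. w x * (\<Sum>k\<in>K. (c k / C) * ((C / c k) powr p * norm (u k x) powr p)))"
    using w by (intro sum_mono mult_left_mono pt) auto
  also have "... = (\<Sum>k\<in>K. (c k / C) * (C / c k) powr p * (\<Sum>x\<in>A. w x * norm (u k x) powr p))"
    by (simp add: sum_distrib_left sum.swap[of _ A] mult_ac)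
  also have "... \<le> (\<Sum>k\<in>K. (c k / C) * (C / c k) powr p * (c k powr p * B))"
    using b c C by (intro sum_mono mult_left_mono) auto
  also have "... = (\<Sum>k\<in>K. (c k / C) * C powr p * B)"
  proof (intro sum.cong refl)
    fix k assume "k \<in> K"
    then have "c k > 0" using c by auto
    then have "(C / c k) powr p * c k powr p = C powr p"
      using C by (simp add: powr_mult[symmetric])
    then show "(c k / C) * (C / c k) powr p * (c k powr p * B) = (c k / C) * C powr p * B"
      by (metis mult.assoc)
  qed
  also have "... = (\<Sum>k\<in>K. c k / C) * (C powr p * B)"
    by (simp only: sum_distrib_right mult.assoc)
  also have "... = C powr p * B" using s1 by simp
  finally show ?thesis unfolding C_def .
qed

lemma weighted_amgm:
  fixes s r :: real
  assumes "0 < s" "s < 1" "0 \<le> r" "r \<le> 1"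
  shows "s powr (1 - r) * (1 - s) powr r + s powr r * (1 - s) powr (1 - r) \<le> 1"
proof -
  have "s powr (1 - r) * (1 - s) powr r \<le> (1 - r) * s + r * (1 - s)"
    using Youngs_inequality_0[of "1 - r" r s "1 - s"] assms by auto
  moreover have "s powr r * (1 - s) powr (1 - r) \<le> r * s + (1 - r) * (1 - s)"
    using Youngs_inequality_0[of r "1 - r" s "1 - s"] assms by auto
  ultimately show ?thesis by (simp add: algebra_simps)
qed

lemma scalar_bound:
  fixes s m p :: real
  assumes s: "0 < s" "s < 1" and m: "0 < m" "m < 1" and p: "1 \<le> p" "p \<le> 2"
  shows "(s + (1 - s) * m) * \<bar>(1 - m) / (s + (1 - s) * m)\<bar> powr p + (1 - s) * (1 - m) * \<bar>- 1 / (1 - s)\<bar> powr p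
     \<le> (1 / sqrt (s * (1 - s))) powr p"
proof -
  define a where "a = s + (1 - s) * m"
  have "(1 - s) * m \<ge> 0" using s m by simp
  then have a: "a \<ge> s" "a > 0" using s unfolding a_def by auto
  have t1: "a * \<bar>(1 - m) / a\<bar> powr p \<le> s powr (1 - p)"
  proof -
    have "a * \<bar>(1 - m) / a\<bar> powr p = a powr (1 - p) * (1 - m) powr p"
      using a m by (simp add: powr_divide powr_diff field_simps)
    also have "... \<le> s powr (1 - p) * 1"
    proof (rule mult_mono)
      show "a powr (1 - p) \<le> s powr (1 - p)" using a s p by (intro powr_mono2') auto
      have "(1 - m) powr p \<le> (1 - m) powr 0" by (rule powr_mono') (use m p in auto)
      then show "(1 - m) powr p \<le> 1" using m by simp
    qed auto
    finally show ?thesis by simp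
  qed
  have t2: "(1 - s) * (1 - m) * \<bar>- 1 / (1 - s)\<bar> powr p \<le> (1 - s) powr (1 - p)"
  proof -
    have "(1 - s) * (1 - m) * \<bar>- 1 / (1 - s)\<bar> powr p = (1 - m) * (1 - s) powr (1 - p)"
      using s by (simp add: powr_divide powr_diff field_simps)
    also have "... \<le> 1 * (1 - s) powr (1 - p)" using m by (intro mult_right_mono) auto
    finally show ?thesis by simp
  qed
  have key: "s powr (1 - p) + (1 - s) powr (1 - p) \<le> (1 / sqrt (s * (1 - s))) powr p"
  proof -
    define r where "r = p / 2"
    have r: "0 \<le> r" "r \<le> 1" using p unfolding r_def by auto
    have h: "1 / sqrt (s * (1 - s)) = (s * (1 - s)) powr (-(1/2))"
      using s by (simp add: powr_minus_divide powr_half_sqrt)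
    have sq: "(1 / sqrt (s * (1 - s))) powr p = s powr (- r) * (1 - s) powr (- r)"
      unfolding h using s by (simp add: powr_powr powr_mult r_def)
    have e1: "s powr (1 - p) = (s powr (1 - r) * (1 - s) powr r) * (s powr (- r) * (1 - s) powr (- r))"
    proof -
      have "(s powr (1 - r) * (1 - s) powr r) * (s powr (- r) * (1 - s) powr (- r))
          = (s powr (1 - r) * s powr (- r)) * ((1 - s) powr r * (1 - s) powr (- r))" by (simp add: mult_ac)
      also have "... = s powr (1 - p)" using s by (simp add: powr_add[symmetric] r_def)
      finally show ?thesis by simp
    qed
    have e2: "(1 - s) powr (1 - p) = (s powr r * (1 - s) powr (1 - r)) * (s powr (- r) * (1 - s) powr (- r))"
    proof -
      have "(s powr r * (1 - s) powr (1 - r)) * (s powr (- r) * (1 - s) powr (- r))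
          = (s powr r * s powr (- r)) * ((1 - s) powr (1 - r) * (1 - s) powr (- r))" by (simp add: mult_ac)
      also have "... = (1 - s) powr (1 - p)" using s by (simp add: powr_add[symmetric] r_def)
      finally show ?thesis by simp
    qed
    have "s powr (1 - p) + (1 - s) powr (1 - p)
       = (s powr (1 - r) * (1 - s) powr r + s powr r * (1 - s) powr (1 - r)) * (s powr (- r) * (1 - s) powr (- r))"
      unfolding e1 e2 by (simp add: algebra_simps)
    also have "... \<le> 1 * (s powr (- r) * (1 - s) powr (- r))"
      using weighted_amgm[OF s r] by (intro mult_right_mono) auto
    finally show ?thesis unfolding sq by simp
  qed
  show ?thesis using t1 t2 key unfolding a_def by linarith
qed

definition mm :: "(nat \<Rightarrow> real) \<Rightarrow> nat \<Rightarrow> real \<Rightarrow> real" where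
  "mm \<alpha> i b = (if b = 1 then \<alpha> i else 1 - \<alpha> i)"
definition kk :: "(nat \<Rightarrow> real) \<Rightarrow> nat \<Rightarrow> real \<Rightarrow> real \<Rightarrow> real \<Rightarrow> real" where
  "kk \<alpha> i s a b = (if a = b then s else 0) + (1 - s) * mm \<alpha> i b"
definition dk :: "(nat \<Rightarrow> real) \<Rightarrow> nat \<Rightarrow> real \<Rightarrow> real \<Rightarrow> real" where
  "dk \<alpha> i a b = (if a = b then 1 else 0) - mm \<alpha> i b"
definition KK :: "(nat \<Rightarrow> real) \<Rightarrow> nat \<Rightarrow> real \<Rightarrow> (nat \<Rightarrow> real) \<Rightarrow> (nat \<Rightarrow> real) \<Rightarrow> real" where
  "KK \<alpha> n s x \<xi> = (\<Prod>j<n. kk \<alpha> j s (x j) (\<xi> j))"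
definition KD :: "(nat \<Rightarrow> real) \<Rightarrow> nat \<Rightarrow> real \<Rightarrow> (nat \<Rightarrow> real) \<Rightarrow> (nat \<Rightarrow> real) \<Rightarrow> real" where
  "KD \<alpha> n s x \<xi> = (\<Sum>i<n. dk \<alpha> i (x i) (\<xi> i) * (\<Prod>j\<in>{..<n} - {i}. kk \<alpha> j s (x j) (\<xi> j)))"
definition GG :: "(nat \<Rightarrow> real) \<Rightarrow> nat \<Rightarrow> ((nat \<Rightarrow> real) \<Rightarrow> 'a::real_normed_vector) \<Rightarrow> real \<Rightarrow> (nat \<Rightarrow> real) \<Rightarrow> 'a" where
  "GG \<alpha> n f s x = (\<Sum>\<xi>\<in>cube n. KD \<alpha> n s x \<xi> *\<^sub>R f \<xi>)"

lemma mu_eq: "mu \<alpha> n x = (\<Prod>j<n. mm \<alpha> j (x j))"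
  unfolding mu_def mm_def by simp

lemma flip_mem: "i < n \<Longrightarrow> \<xi> \<in> cube n \<Longrightarrow> \<xi>(i := - \<xi> i) \<in> cube n"
  unfolding cube_def by (auto simp: PiE_iff extensional_def)

lemma sum_flip:
  assumes "i < n"
  shows "(\<Sum>\<xi>\<in>cube n. F \<xi>) = (\<Sum>\<xi>\<in>cube n. F (\<xi>(i := - \<xi> i)))"
  by (rule sum.reindex_bij_witness[of _ "\<lambda>\<xi>. \<xi>(i := - \<xi> i)" "\<lambda>\<xi>. \<xi>(i := - \<xi> i)"])
    (auto simp: flip_mem assms)

lemma mm_props:
  assumes "0 < \<alpha> i" "\<alpha> i < 1"
  shows "0 < mm \<alpha> i b" "mm \<alpha> i b < 1" "b = 1 \<or> b = -1 \<Longrightarrow> mm \<alpha> i b + mm \<alpha> i (- b) = 1"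
  using assms unfolding mm_def by auto

lemma kk_pos:
  assumes "0 < \<alpha> i" "\<alpha> i < 1" "0 < s" "s < 1"
  shows "0 < kk \<alpha> i s a b"
proof -
  have "0 < (1 - s) * mm \<alpha> i b" using mm_props[of \<alpha> i, OF assms(1,2)] assms(4) by simp
  then show ?thesis unfolding kk_def using assms(3) by auto
qed

lemma kk_sum:
  assumes "a = 1 \<or> a = -1"
  shows "kk \<alpha> i s a 1 + kk \<alpha> i s a (-1) = 1"
  using assms unfolding kk_def mm_def by (auto simp: algebra_simps)

lemma kk_sym: "mm \<alpha> i a * kk \<alpha> i s a b = mm \<alpha> i b * kk \<alpha> i s b a"
  unfolding kk_def by (auto simp: algebra_simps)

lemma dk_flip:
  assumes "a = 1 \<or> a = -1" "b = 1 \<or> b = -1"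
  shows "dk \<alpha> i a b + dk \<alpha> i a (- b) = 0"
  using assms unfolding dk_def mm_def by auto

lemma coef_bound:
  assumes b: "b = 1 \<or> b = -1" and al: "0 < \<alpha> i" "\<alpha> i < 1" and s: "0 < s" "s < 1"
    and p: "1 \<le> p" "p \<le> 2"
  defines "Y \<equiv> \<lambda>a. dk \<alpha> i a b / kk \<alpha> i s a b"
  shows "kk \<alpha> i s b 1 * Y 1 + kk \<alpha> i s b (-1) * Y (-1) = 0"
    and "kk \<alpha> i s b 1 * \<bar>Y 1\<bar> powr p + kk \<alpha> i s b (-1) * \<bar>Y (-1)\<bar> powr p \<le> (1 / sqrt (s * (1 - s))) powr p"
proof -
  define m where "m = mm \<alpha> i b"
  have m: "0 < m" "m < 1" using mm_props[of \<alpha> i, OF al] unfolding m_def by auto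
  have mb: "mm \<alpha> i (- b) = 1 - m" using mm_props(3)[of \<alpha> i, OF al b] unfolding m_def by simp
  have ne: "- b \<noteq> b" using b by auto
  have qb: "kk \<alpha> i s b b = s + (1 - s) * m" unfolding kk_def m_def by simp
  have qo: "kk \<alpha> i s b (- b) = (1 - s) * (1 - m)" unfolding kk_def using ne mb by simp
  have kob: "kk \<alpha> i s (- b) b = (1 - s) * m" unfolding kk_def m_def using ne by simp
  have Yb: "Y b = (1 - m) / (s + (1 - s) * m)" unfolding Y_def dk_def qb m_def by simp
  have Yo: "Y (- b) = - 1 / (1 - s)"
  proof -
    have "Y (- b) = (- m) / ((1 - s) * m)" unfolding Y_def dk_def kob m_def using ne by simp
    also have "... = - 1 / (1 - s)" using m s by (simp add: field_simps)
    finally show ?thesis .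
  qed
  have sum_eq: "kk \<alpha> i s b 1 * g 1 + kk \<alpha> i s b (-1) * g (-1) = kk \<alpha> i s b b * g b + kk \<alpha> i s b (- b) * g (- b)" for g
    using b by auto
  have pos: "s + (1 - s) * m > 0"
  proof -
    have "(1 - s) * m \<ge> 0" using s m by simp
    then show ?thesis using s by linarith
  qed
  show "kk \<alpha> i s b 1 * Y 1 + kk \<alpha> i s b (-1) * Y (-1) = 0"
    unfolding sum_eq[of Y] qb qo Yb Yo using pos s by (simp add: field_simps)
  show "kk \<alpha> i s b 1 * \<bar>Y 1\<bar> powr p + kk \<alpha> i s b (-1) * \<bar>Y (-1)\<bar> powr p \<le> (1 / sqrt (s * (1 - s))) powr p"
    unfolding sum_eq[of "\<lambda>a. \<bar>Y a\<bar> powr p"] qb qo Yb Yo using scalar_bound[OF s m p] by simp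
qed

lemma GG_repr:
  fixes f :: "(nat \<Rightarrow> real) \<Rightarrow> 'a::real_normed_vector"
  assumes al: "\<forall>i<n. 0 < \<alpha> i \<and> \<alpha> i < 1" and s: "0 < s" "s < 1" and x: "x \<in> cube n"
  shows "GG \<alpha> n f s x = (\<Sum>\<xi>\<in>cube n. KK \<alpha> n s x \<xi> *\<^sub>R
            (\<Sum>i<n. (dk \<alpha> i (x i) (\<xi> i) / kk \<alpha> i s (x i) (\<xi> i)) *\<^sub>R partial i (\<alpha> i) f \<xi>))"
proof -
  define c where "c i \<xi> = dk \<alpha> i (x i) (\<xi> i) * (\<Prod>j\<in>{..<n} - {i}. kk \<alpha> j s (x j) (\<xi> j))" for i \<xi>
  have "GG \<alpha> n f s x = (\<Sum>\<xi>\<in>cube n. \<Sum>i<n. c i \<xi> *\<^sub>R f \<xi>)"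
    unfolding GG_def KD_def c_def by (simp add: scaleR_sum_left)
  also have "... = (\<Sum>i<n. \<Sum>\<xi>\<in>cube n. c i \<xi> *\<^sub>R f \<xi>)" by (rule sum.swap)
  also have "... = (\<Sum>i<n. \<Sum>\<xi>\<in>cube n. c i \<xi> *\<^sub>R partial i (\<alpha> i) f \<xi>)"
  proof (rule sum.cong[OF refl])
    fix i assume "i \<in> {..<n}" then have i: "i < n" by simp
    define g where "g \<xi> = \<alpha> i *\<^sub>R f (\<xi>(i := 1)) + (1 - \<alpha> i) *\<^sub>R f (\<xi>(i := -1))" for \<xi>
    have fp: "partial i (\<alpha> i) f \<xi> + g \<xi> = f \<xi>" for \<xi> unfolding partial_def g_def by simp
    define Z where "Z = (\<Sum>\<xi>\<in>cube n. c i \<xi> *\<^sub>R g \<xi>)"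
    have "Z = (\<Sum>\<xi>\<in>cube n. c i (\<xi>(i := - \<xi> i)) *\<^sub>R g (\<xi>(i := - \<xi> i)))"
      unfolding Z_def by (rule sum_flip[OF i])
    also have "... = (\<Sum>\<xi>\<in>cube n. (- c i \<xi>) *\<^sub>R g \<xi>)"
    proof (rule sum.cong[OF refl])
      fix \<xi> assume \<xi>: "\<xi> \<in> cube n"
      have g: "g (\<xi>(i := - \<xi> i)) = g \<xi>" unfolding g_def by simp
      have pr: "(\<Prod>j\<in>{..<n} - {i}. kk \<alpha> j s (x j) ((\<xi>(i := - \<xi> i)) j)) = (\<Prod>j\<in>{..<n} - {i}. kk \<alpha> j s (x j) (\<xi> j))"
        by (intro prod.cong) auto
      have "dk \<alpha> i (x i) (\<xi> i) + dk \<alpha> i (x i) (- \<xi> i) = 0"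
        using cube_val[OF x i] cube_val[OF \<xi> i] by (intro dk_flip)
      then have dd: "dk \<alpha> i (x i) (- \<xi> i) = - dk \<alpha> i (x i) (\<xi> i)" by linarith
      have "c i (\<xi>(i := - \<xi> i)) = - c i \<xi>" unfolding c_def pr using dd by simp
      then show "c i (\<xi>(i := - \<xi> i)) *\<^sub>R g (\<xi>(i := - \<xi> i)) = (- c i \<xi>) *\<^sub>R g \<xi>" using g by simp
    qed
    also have "... = - Z" unfolding Z_def by (simp add: sum_negf)
    finally have "Z + Z = 0" by (metis add.right_inverse)
    then have "2 *\<^sub>R Z = 0" by (simp add: scaleR_2)
    then have Z0: "Z = 0" by simp
    have "(\<Sum>\<xi>\<in>cube n. c i \<xi> *\<^sub>R partial i (\<alpha> i) f \<xi>) + Z = (\<Sum>\<xi>\<in>cube n. c i \<xi> *\<^sub>R f \<xi>)"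
      unfolding Z_def sum.distrib[symmetric] scaleR_add_right[symmetric] fp by (rule refl)
    then show "(\<Sum>\<xi>\<in>cube n. c i \<xi> *\<^sub>R f \<xi>) = (\<Sum>\<xi>\<in>cube n. c i \<xi> *\<^sub>R partial i (\<alpha> i) f \<xi>)"
      using Z0 by simp
  qed
  also have "... = (\<Sum>i<n. \<Sum>\<xi>\<in>cube n. (KK \<alpha> n s x \<xi> * (dk \<alpha> i (x i) (\<xi> i) / kk \<alpha> i s (x i) (\<xi> i))) *\<^sub>R partial i (\<alpha> i) f \<xi>)"
  proof (intro sum.cong refl)
    fix i \<xi> assume "i \<in> {..<n}" "\<xi> \<in> cube n"
    then have i: "i < n" by simp
    have kpos: "kk \<alpha> i s (x i) (\<xi> i) > 0" using kk_pos al s i by auto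
    have "KK \<alpha> n s x \<xi> = kk \<alpha> i s (x i) (\<xi> i) * (\<Prod>j\<in>{..<n} - {i}. kk \<alpha> j s (x j) (\<xi> j))"
      unfolding KK_def using i by (subst prod.remove[of _ i]) auto
    then have "c i \<xi> = KK \<alpha> n s x \<xi> * (dk \<alpha> i (x i) (\<xi> i) / kk \<alpha> i s (x i) (\<xi> i))"
      unfolding c_def using kpos by (simp add: field_simps)
    then show "c i \<xi> *\<^sub>R partial i (\<alpha> i) f \<xi> = (KK \<alpha> n s x \<xi> * (dk \<alpha> i (x i) (\<xi> i) / kk \<alpha> i s (x i) (\<xi> i))) *\<^sub>R partial i (\<alpha> i) f \<xi>"
      by simp
  qed
  also have "... = (\<Sum>\<xi>\<in>cube n. \<Sum>i<n. (KK \<alpha> n s x \<xi> * (dk \<alpha> i (x i) (\<xi> i) / kk \<alpha> i s (x i) (\<xi> i))) *\<^sub>R partial i (\<alpha> i) f \<xi>)"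
    by (rule sum.swap)
  also have "... = (\<Sum>\<xi>\<in>cube n. KK \<alpha> n s x \<xi> *\<^sub>R
            (\<Sum>i<n. (dk \<alpha> i (x i) (\<xi> i) / kk \<alpha> i s (x i) (\<xi> i)) *\<^sub>R partial i (\<alpha> i) f \<xi>))"
    by (simp add: scaleR_sum_right)
  finally show ?thesis .
qed

lemma main_est:
  fixes f :: "(nat \<Rightarrow> real) \<Rightarrow> 'a::real_normed_vector"
  assumes p: "1 \<le> p" "p \<le> 2" and T: "T \<in> rad_type_consts TYPE('a) p"
    and al: "\<forall>i<n. 0 < \<alpha> i \<and> \<alpha> i < 1" and s: "0 < s" "s < 1"
  shows "(\<Sum>x\<in>cube n. mu \<alpha> n x * norm (GG \<alpha> n f s x) powr p)
     \<le> (2 * T * (1 / sqrt (s * (1 - s)))) powr p * (\<Sum>i<n. \<Sum>x\<in>cube n. mu \<alpha> n x * norm (partial i (\<alpha> i) f x) powr p)"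
proof -
  define H where "H = 1 / sqrt (s * (1 - s))"
  have H: "H \<ge> 0" unfolding H_def using s by simp
  have T0: "T \<ge> 0" using T unfolding rad_type_consts_def by auto
  define V where "V x \<xi> = (\<Sum>i<n. (dk \<alpha> i (x i) (\<xi> i) / kk \<alpha> i s (x i) (\<xi> i)) *\<^sub>R partial i (\<alpha> i) f \<xi>)" for x \<xi>
  have KK_nn: "KK \<alpha> n s x \<xi> \<ge> 0" if "x \<in> cube n" for x \<xi>
    unfolding KK_def using kk_pos al s by (intro prod_nonneg) (auto intro: less_imp_le)
  have KK_tot: "(\<Sum>\<xi>\<in>cube n. KK \<alpha> n s x \<xi>) = 1" if "x \<in> cube n" for x
    unfolding KK_def using cube_total[of n "\<lambda>j b. kk \<alpha> j s (x j) b"] kk_sum cube_val[OF that] by auto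
  have mu_nn: "mu \<alpha> n x \<ge> 0" for x
    unfolding mu_eq using mm_props al by (intro prod_nonneg) (auto intro: less_imp_le)
  have step1: "norm (GG \<alpha> n f s x) powr p \<le> (\<Sum>\<xi>\<in>cube n. KK \<alpha> n s x \<xi> * norm (V x \<xi>) powr p)"
    if x: "x \<in> cube n" for x
  proof -
    have "GG \<alpha> n f s x = (\<Sum>\<xi>\<in>cube n. KK \<alpha> n s x \<xi> *\<^sub>R V x \<xi>)"
      unfolding V_def by (rule GG_repr[OF al s x])
    then show ?thesis using jensen_norm[of "cube n" "KK \<alpha> n s x" p "V x"] KK_nn[OF x] KK_tot[OF x] p by simp
  qed
  have sym: "mu \<alpha> n x * KK \<alpha> n s x \<xi> = mu \<alpha> n \<xi> * KK \<alpha> n s \<xi> x" for x \<xi>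
  proof -
    have "mu \<alpha> n x * KK \<alpha> n s x \<xi> = (\<Prod>j<n. mm \<alpha> j (x j) * kk \<alpha> j s (x j) (\<xi> j))"
      unfolding mu_eq KK_def by (simp add: prod.distrib)
    also have "... = (\<Prod>j<n. mm \<alpha> j (\<xi> j) * kk \<alpha> j s (\<xi> j) (x j))"
      by (intro prod.cong refl kk_sym)
    also have "... = mu \<alpha> n \<xi> * KK \<alpha> n s \<xi> x"
      unfolding mu_eq KK_def by (simp add: prod.distrib)
    finally show ?thesis .
  qed
  have step2: "(\<Sum>x\<in>cube n. KK \<alpha> n s \<xi> x * norm (V x \<xi>) powr p)
      \<le> (2 * T) powr p * (\<Sum>i<n. H powr p * norm (partial i (\<alpha> i) f \<xi>) powr p)"
    if \<xi>: "\<xi> \<in> cube n" for \<xi>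
  proof -
    have bv: "\<xi> i = 1 \<or> \<xi> i = -1" if "i < n" for i using cube_val[OF \<xi> that] .
    have "(\<Sum>x\<in>cube n. KK \<alpha> n s \<xi> x * norm (V x \<xi>) powr p)
      \<le> (2 * T) powr p * (\<Sum>i<n. (kk \<alpha> i s (\<xi> i) 1 * \<bar>dk \<alpha> i 1 (\<xi> i) / kk \<alpha> i s 1 (\<xi> i)\<bar> powr p
          + kk \<alpha> i s (\<xi> i) (-1) * \<bar>dk \<alpha> i (-1) (\<xi> i) / kk \<alpha> i s (-1) (\<xi> i)\<bar> powr p) * norm (partial i (\<alpha> i) f \<xi>) powr p)"
      unfolding KK_def V_def
    proof (rule symm_type[OF p(1) T])
      show "\<forall>i<n. 0 \<le> kk \<alpha> i s (\<xi> i) 1 \<and> 0 \<le> kk \<alpha> i s (\<xi> i) (- 1) \<and> kk \<alpha> i s (\<xi> i) 1 + kk \<alpha> i s (\<xi> i) (- 1) = 1"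
        using kk_pos al s kk_sum bv by (auto intro: less_imp_le)
      show "\<forall>i<n. kk \<alpha> i s (\<xi> i) 1 * (dk \<alpha> i 1 (\<xi> i) / kk \<alpha> i s 1 (\<xi> i)) + kk \<alpha> i s (\<xi> i) (- 1) * (dk \<alpha> i (- 1) (\<xi> i) / kk \<alpha> i s (- 1) (\<xi> i)) = 0"
        using coef_bound(1) bv al s p by auto
    qed
    also have "... \<le> (2 * T) powr p * (\<Sum>i<n. H powr p * norm (partial i (\<alpha> i) f \<xi>) powr p)"
    proof (rule mult_left_mono, rule sum_mono, rule mult_right_mono)
      fix i assume "i \<in> {..<n}"
      then have i: "i < n" by simp
      show "kk \<alpha> i s (\<xi> i) 1 * \<bar>dk \<alpha> i 1 (\<xi> i) / kk \<alpha> i s 1 (\<xi> i)\<bar> powr p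
          + kk \<alpha> i s (\<xi> i) (-1) * \<bar>dk \<alpha> i (-1) (\<xi> i) / kk \<alpha> i s (-1) (\<xi> i)\<bar> powr p \<le> H powr p"
        unfolding H_def using coef_bound(2)[OF bv[OF i], of \<alpha> i s p] al s p i by auto
    qed auto
    finally show ?thesis .
  qed
  have "(\<Sum>x\<in>cube n. mu \<alpha> n x * norm (GG \<alpha> n f s x) powr p)
      \<le> (\<Sum>x\<in>cube n. mu \<alpha> n x * (\<Sum>\<xi>\<in>cube n. KK \<alpha> n s x \<xi> * norm (V x \<xi>) powr p))"
    by (intro sum_mono mult_left_mono step1 mu_nn)
  also have "... = (\<Sum>x\<in>cube n. \<Sum>\<xi>\<in>cube n. mu \<alpha> n \<xi> * (KK \<alpha> n s \<xi> x * norm (V x \<xi>) powr p))"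
    by (simp add: sum_distrib_left mult.assoc[symmetric] sym)
  also have "... = (\<Sum>\<xi>\<in>cube n. \<Sum>x\<in>cube n. mu \<alpha> n \<xi> * (KK \<alpha> n s \<xi> x * norm (V x \<xi>) powr p))"
    by (rule sum.swap)
  also have "... = (\<Sum>\<xi>\<in>cube n. mu \<alpha> n \<xi> * (\<Sum>x\<in>cube n. KK \<alpha> n s \<xi> x * norm (V x \<xi>) powr p))"
    by (simp add: sum_distrib_left)
  also have "... \<le> (\<Sum>\<xi>\<in>cube n. mu \<alpha> n \<xi> * ((2 * T) powr p * (\<Sum>i<n. H powr p * norm (partial i (\<alpha> i) f \<xi>) powr p)))"
    by (intro sum_mono mult_left_mono step2 mu_nn)
  also have "... = (2 * T * H) powr p * (\<Sum>\<xi>\<in>cube n. \<Sum>i<n. mu \<alpha> n \<xi> * norm (partial i (\<alpha> i) f \<xi>) powr p)"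
    using T0 H by (simp add: powr_mult sum_distrib_left mult_ac)
  also have "... = (2 * T * H) powr p * (\<Sum>i<n. \<Sum>\<xi>\<in>cube n. mu \<alpha> n \<xi> * norm (partial i (\<alpha> i) f \<xi>) powr p)"
    by (subst sum.swap) (rule refl)
  finally show ?thesis unfolding H_def .
qed

definition sp :: "nat \<Rightarrow> nat \<Rightarrow> real" where "sp N k = (sin (pi * real k / (2 * real N)))\<^sup>2"
definition sg :: "nat \<Rightarrow> nat \<Rightarrow> real" where "sg N k = (sin (pi * (2 * real k + 1) / (4 * real N)))\<^sup>2"
definition Dl :: "nat \<Rightarrow> nat \<Rightarrow> real" where "Dl N k = sp N (Suc k) - sp N k"

lemma sin_sq_diff: "(sin (a::real))\<^sup>2 - (sin b)\<^sup>2 = sin (a + b) * sin (a - b)"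
proof -
  have "sin (a + b) * sin (a - b) = (sin a)\<^sup>2 * (cos b)\<^sup>2 - (cos a)\<^sup>2 * (sin b)\<^sup>2"
    unfolding sin_add sin_diff by (simp add: power2_eq_square algebra_simps)
  also have "... = (sin a)\<^sup>2 - (sin b)\<^sup>2" by (simp add: cos_squared_eq algebra_simps)
  finally show ?thesis by simp
qed

lemma Dl_eq: assumes "0 < N"
  shows "Dl N k = sin (pi * (2 * real k + 1) / (2 * real N)) * sin (pi / (2 * real N))"
proof -
  have "Dl N k = sin (pi * real (Suc k) / (2 * real N) + pi * real k / (2 * real N)) *
                 sin (pi * real (Suc k) / (2 * real N) - pi * real k / (2 * real N))"
    unfolding Dl_def sp_def by (rule sin_sq_diff)
  also have "pi * real (Suc k) / (2 * real N) + pi * real k / (2 * real N) = pi * (2 * real k + 1) / (2 * real N)"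
    using assms by (simp add: field_simps)
  also have "pi * real (Suc k) / (2 * real N) - pi * real k / (2 * real N) = pi / (2 * real N)"
    using assms by (simp add: field_simps)
  finally show ?thesis .
qed

lemma angle_facts: assumes "0 < N" "k < N"
  shows "0 < pi * (2 * real k + 1) / (2 * real N)" "pi * (2 * real k + 1) / (2 * real N) < pi"
    "0 < pi / (2 * real N)" "pi / (2 * real N) < pi"
proof -
  have N: "real N \<ge> 1" using assms by simp
  have k: "2 * real k + 1 < 2 * real N" using assms by linarith
  show "0 < pi * (2 * real k + 1) / (2 * real N)" using N by simp
  have "pi * (2 * real k + 1) < pi * (2 * real N)" using k by (intro mult_strict_left_mono) auto
  then show "pi * (2 * real k + 1) / (2 * real N) < pi" using N by (simp add: divide_less_eq)
  show "0 < pi / (2 * real N)" using N by simp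
  show "pi / (2 * real N) < pi" using N by (simp add: field_simps)
qed

lemma Dl_pos: assumes "0 < N" "k < N" shows "0 < Dl N k"
  unfolding Dl_eq[OF assms(1)] using angle_facts[OF assms] by (intro mult_pos_pos sin_gt_zero) auto

lemma Dl_le: assumes "0 < N" "k < N" shows "Dl N k \<le> pi / (2 * real N)"
proof -
  have "Dl N k \<le> 1 * sin (pi / (2 * real N))"
    unfolding Dl_eq[OF assms(1)] using angle_facts[OF assms]
    by (intro mult_right_mono sin_le_one less_imp_le sin_gt_zero) auto
  also have "... \<le> pi / (2 * real N)" using angle_facts[OF assms] by (simp add: sin_x_le_x)
  finally show ?thesis .
qed

lemma phi_facts: assumes "0 < N" "k < N"
  shows "0 < pi * (2 * real k + 1) / (4 * real N)" "pi * (2 * real k + 1) / (4 * real N) < pi / 2"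
proof -
  have N: "real N \<ge> 1" using assms by simp
  have k: "2 * real k + 1 < 2 * real N" using assms by linarith
  show "0 < pi * (2 * real k + 1) / (4 * real N)" using N by simp
  have "pi * (2 * real k + 1) < pi * (2 * real N)" using k by (intro mult_strict_left_mono) auto
  then show "pi * (2 * real k + 1) / (4 * real N) < pi / 2" using N by (simp add: divide_less_eq)
qed

lemma sg_bounds: assumes "0 < N" "k < N" shows "0 < sg N k" "sg N k < 1"
proof -
  define \<phi> where "\<phi> = pi * (2 * real k + 1) / (4 * real N)"
  have ph: "0 < \<phi>" "\<phi> < pi / 2" using phi_facts[OF assms] unfolding \<phi>_def by auto
  have s: "sin \<phi> > 0" using ph by (intro sin_gt_zero) auto
  have c: "cos \<phi> > 0" using ph by (intro cos_gt_zero) auto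
  show "0 < sg N k" unfolding sg_def \<phi>_def[symmetric] using s by simp
  show "sg N k < 1" unfolding sg_def \<phi>_def[symmetric] using c sin_squared_eq[of \<phi>] by simp
qed

lemma Dl_H: assumes "0 < N" "k < N"
  shows "Dl N k * (1 / sqrt (sg N k * (1 - sg N k))) = 2 * sin (pi / (2 * real N))"
proof -
  define \<phi> where "\<phi> = pi * (2 * real k + 1) / (4 * real N)"
  have ph: "0 < \<phi>" "\<phi> < pi / 2" using phi_facts[OF assms] unfolding \<phi>_def by auto
  have s: "sin \<phi> > 0" using ph by (intro sin_gt_zero) auto
  have c: "cos \<phi> > 0" using ph by (intro cos_gt_zero) auto
  have "sg N k * (1 - sg N k) = (sin \<phi> * cos \<phi>)\<^sup>2"
    unfolding sg_def \<phi>_def[symmetric] by (simp add: cos_squared_eq power_mult_distrib)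
  then have sq: "sqrt (sg N k * (1 - sg N k)) = sin \<phi> * cos \<phi>" using s c by simp
  have "pi * (2 * real k + 1) / (2 * real N) = 2 * \<phi>" unfolding \<phi>_def using assms by (simp add: field_simps)
  then have "Dl N k = 2 * sin \<phi> * cos \<phi> * sin (pi / (2 * real N))"
    unfolding Dl_eq[OF assms(1)] by (simp add: sin_double)
  then show ?thesis unfolding sq using s c by (simp add: field_simps)
qed

lemma sp_sg_mono: assumes "0 < N" "k < N" shows "sp N k \<le> sg N k" "sg N k \<le> sp N (Suc k)"
proof -
  have N: "real N \<ge> 1" using assms by simp
  have k: "real k + 1 \<le> real N" using assms by linarith
  define a where "a = pi * real k / (2 * real N)"
  define b where "b = pi * real (Suc k) / (2 * real N)"
  define \<phi> where "\<phi> = pi * (2 * real k + 1) / (4 * real N)"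
  have a0: "0 \<le> a" unfolding a_def by simp
  have ap: "a \<le> \<phi>" unfolding a_def \<phi>_def using N by (simp add: field_simps)
  have pb: "\<phi> \<le> b" unfolding b_def \<phi>_def using N by (simp add: field_simps)
  have "pi * (real k + 1) \<le> pi * real N" using k by (intro mult_left_mono) auto
  then have b2: "b \<le> pi / 2" unfolding b_def using N by (simp add: divide_le_eq)
  have sa: "0 \<le> sin a" using a0 b2 ap pb by (intro sin_ge_zero) auto
  have sap: "sin a \<le> sin \<phi>" using a0 ap pb b2 by (intro sin_monotone_2pi_le) auto
  have spb: "sin \<phi> \<le> sin b" using a0 ap pb b2 by (intro sin_monotone_2pi_le) auto
  show "sp N k \<le> sg N k" unfolding sp_def sg_def a_def[symmetric] \<phi>_def[symmetric]
    using sa sap by (intro power_mono) auto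
  show "sg N k \<le> sp N (Suc k)" unfolding sp_def sg_def b_def[symmetric] \<phi>_def[symmetric]
    using sa sap spb by (intro power_mono) auto
qed

lemma sp_0: "sp N 0 = 0" unfolding sp_def by simp
lemma sp_N: "0 < N \<Longrightarrow> sp N N = 1" unfolding sp_def by simp
lemma sp_range: "0 \<le> sp N k" "sp N k \<le> 1"
  unfolding sp_def by (auto simp: abs_square_le_1)

lemma riemann:
  fixes \<phi> \<phi>' :: "real \<Rightarrow> real"
  assumes der: "\<And>t. (\<phi> has_real_derivative \<phi>' t) (at t)" and cont: "continuous_on {0..1} \<phi>'"
  shows "(\<lambda>N. \<Sum>k<N. Dl N k * \<phi>' (sg N k)) \<longlonglongrightarrow> \<phi> 1 - \<phi> 0"
proof (rule LIMSEQ_I)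
  fix r :: real assume r: "0 < r"
  have uc: "uniformly_continuous_on {0..1} \<phi>'" using cont by (intro compact_uniformly_continuous) auto
  obtain d where d: "d > 0" "\<And>x x'. x \<in> {0..1} \<Longrightarrow> x' \<in> {0..1} \<Longrightarrow> dist x' x < d \<Longrightarrow> dist (\<phi>' x') (\<phi>' x) < r / 2"
    using uniformly_continuous_onE[OF uc, of "r/2"] r by (metis half_gt_zero)
  obtain M :: nat where M: "pi / d < real M" using reals_Archimedean2 by blast
  show "\<exists>no. \<forall>N\<ge>no. norm ((\<Sum>k<N. Dl N k * \<phi>' (sg N k)) - (\<phi> 1 - \<phi> 0)) < r"
  proof (intro exI allI impI)
    fix N assume N: "Suc M \<le> N"
    then have N0: "0 < N" by simp
    have "pi / d < real N" using M N by linarith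
    then have "pi < d * real N" using d by (simp add: divide_less_eq mult.commute)
    then have "pi < d * (2 * real N)" using N0 d by (smt (verit) mult_left_mono of_nat_0_le_iff)
    then have mesh: "pi / (2 * real N) < d" using N0 d by (simp add: divide_less_eq mult.commute)
    have ex: "\<forall>k\<in>{..<N}. \<exists>z. sp N k \<le> z \<and> z \<le> sp N (Suc k) \<and> \<phi> (sp N (Suc k)) - \<phi> (sp N k) = Dl N k * \<phi>' z"
    proof
      fix k assume "k \<in> {..<N}"
      then have k: "k < N" by simp
      have "sp N k < sp N (Suc k)" using Dl_pos[OF N0 k] unfolding Dl_def by simp
      from MVT2[OF this der] obtain z where "sp N k < z" "z < sp N (Suc k)"
        "\<phi> (sp N (Suc k)) - \<phi> (sp N k) = (sp N (Suc k) - sp N k) * \<phi>' z" by blast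
      then show "\<exists>z. sp N k \<le> z \<and> z \<le> sp N (Suc k) \<and> \<phi> (sp N (Suc k)) - \<phi> (sp N k) = Dl N k * \<phi>' z"
        unfolding Dl_def by (intro exI[of _ z]) auto
    qed
    then obtain z where z: "\<forall>k\<in>{..<N}. sp N k \<le> z k \<and> z k \<le> sp N (Suc k) \<and> \<phi> (sp N (Suc k)) - \<phi> (sp N k) = Dl N k * \<phi>' (z k)"
      by (metis bchoice)
    have tel: "\<phi> 1 - \<phi> 0 = (\<Sum>k<N. \<phi> (sp N (Suc k)) - \<phi> (sp N k))"
      using sum_lessThan_telescope[of "\<lambda>k. \<phi> (sp N k)" N] sp_0 sp_N[OF N0] by simp
    have telD: "(\<Sum>k<N. Dl N k) = 1"
      using sum_lessThan_telescope[of "\<lambda>k. sp N k" N] sp_0 sp_N[OF N0] unfolding Dl_def by simp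
    have "(\<Sum>k<N. Dl N k * \<phi>' (sg N k)) - (\<phi> 1 - \<phi> 0) = (\<Sum>k<N. Dl N k * (\<phi>' (sg N k) - \<phi>' (z k)))"
      unfolding tel using z by (simp add: sum_subtractf right_diff_distrib)
    also have "norm ... \<le> (\<Sum>k<N. norm (Dl N k * (\<phi>' (sg N k) - \<phi>' (z k))))" by (rule norm_sum)
    also have "... \<le> (\<Sum>k<N. Dl N k * (r / 2))"
    proof (rule sum_mono)
      fix k assume "k \<in> {..<N}"
      then have k: "k < N" by simp
      have zk: "sp N k \<le> z k" "z k \<le> sp N (Suc k)" using z k by auto
      have sgk: "sp N k \<le> sg N k" "sg N k \<le> sp N (Suc k)" using sp_sg_mono[OF N0 k] by auto
      have "\<bar>sg N k - z k\<bar> \<le> Dl N k" unfolding Dl_def using zk sgk by auto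
      also have "... \<le> pi / (2 * real N)" by (rule Dl_le[OF N0 k])
      finally have dd: "dist (sg N k) (z k) < d" using mesh by (simp add: dist_real_def)
      have r1: "sg N k \<in> {0..1}" "z k \<in> {0..1}" using zk sgk sp_range[of N k] sp_range[of N "Suc k"] by auto
      have "\<bar>\<phi>' (sg N k) - \<phi>' (z k)\<bar> < r / 2" using d(2)[OF r1(2) r1(1) dd] by (simp add: dist_real_def)
      then show "norm (Dl N k * (\<phi>' (sg N k) - \<phi>' (z k))) \<le> Dl N k * (r / 2)"
        using Dl_pos[OF N0 k] by (simp add: abs_mult)
    qed
    also have "... = (\<Sum>k<N. Dl N k) * (r / 2)" by (rule sum_distrib_right[symmetric])
    also have "... = r / 2" using telD by simp
    also have "... < r" using r by simp
    finally show "norm ((\<Sum>k<N. Dl N k * \<phi>' (sg N k)) - (\<phi> 1 - \<phi> 0)) < r" .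
  qed
qed

lemma kk_alt: "kk \<alpha> i s a b = mm \<alpha> i b + s * dk \<alpha> i a b"
  unfolding kk_def dk_def by (auto simp: algebra_simps)

lemma KK_deriv: "((\<lambda>s. KK \<alpha> n s x \<xi>) has_real_derivative KD \<alpha> n s x \<xi>) (at s)"
proof -
  have d: "((\<lambda>s. kk \<alpha> i s (x i) (\<xi> i)) has_derivative (*) (dk \<alpha> i (x i) (\<xi> i))) (at s)" for i
  proof -
    have "((\<lambda>s. mm \<alpha> i (\<xi> i) + s * dk \<alpha> i (x i) (\<xi> i)) has_real_derivative dk \<alpha> i (x i) (\<xi> i)) (at s)"
      by (rule derivative_eq_intros | simp)+
    then show ?thesis unfolding kk_alt by (rule has_field_derivative_imp_has_derivative)
  qed
  have "((\<lambda>s. \<Prod>i<n. kk \<alpha> i s (x i) (\<xi> i)) has_derivative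
     (\<lambda>y. \<Sum>i<n. (dk \<alpha> i (x i) (\<xi> i) * y) * (\<Prod>j\<in>{..<n} - {i}. kk \<alpha> j s (x j) (\<xi> j)))) (at s)"
    by (rule has_derivative_prod) (rule d)
  moreover have "(\<lambda>y. \<Sum>i<n. (dk \<alpha> i (x i) (\<xi> i) * y) * (\<Prod>j\<in>{..<n} - {i}. kk \<alpha> j s (x j) (\<xi> j))) = (*) (KD \<alpha> n s x \<xi>)"
    by (simp add: fun_eq_iff KD_def sum_distrib_left mult_ac)
  ultimately show ?thesis unfolding has_field_derivative_def KK_def by simp
qed

lemma KD_cont: "continuous_on {0..1} (\<lambda>s. KD \<alpha> n s x \<xi>)"
  unfolding KD_def kk_alt by (intro continuous_intros)

lemma KK_1: assumes "x \<in> cube n" "\<xi> \<in> cube n" shows "KK \<alpha> n 1 x \<xi> = (if x = \<xi> then 1 else 0)"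
proof (cases "x = \<xi>")
  case True then show ?thesis unfolding KK_def kk_def by simp
next
  case False
  have "\<exists>j<n. x j \<noteq> \<xi> j"
  proof (rule ccontr)
    assume "\<not> (\<exists>j<n. x j \<noteq> \<xi> j)"
    then have "x j = \<xi> j" for j using cube_out[OF assms(1)] cube_out[OF assms(2)] by (cases "j < n") auto
    then show False using False by auto
  qed
  then show ?thesis using False unfolding KK_def kk_def by auto
qed

lemma KK_0: "KK \<alpha> n 0 x \<xi> = mu \<alpha> n \<xi>"
  unfolding KK_def kk_def mu_eq by simp

lemma R_lim:
  fixes f :: "(nat \<Rightarrow> real) \<Rightarrow> 'a::real_normed_vector"
  assumes x: "x \<in> cube n"
  shows "(\<lambda>N. \<Sum>k<N. Dl N k *\<^sub>R GG \<alpha> n f (sg N k) x) \<longlonglongrightarrow> f x - mu_int \<alpha> n f"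
proof -
  have eq: "(\<Sum>k<N. Dl N k *\<^sub>R GG \<alpha> n f (sg N k) x) = (\<Sum>\<xi>\<in>cube n. (\<Sum>k<N. Dl N k * KD \<alpha> n (sg N k) x \<xi>) *\<^sub>R f \<xi>)" for N
  proof -
    have "(\<Sum>k<N. Dl N k *\<^sub>R GG \<alpha> n f (sg N k) x) = (\<Sum>k<N. \<Sum>\<xi>\<in>cube n. (Dl N k * KD \<alpha> n (sg N k) x \<xi>) *\<^sub>R f \<xi>)"
      unfolding GG_def by (simp add: scaleR_sum_right)
    also have "... = (\<Sum>\<xi>\<in>cube n. \<Sum>k<N. (Dl N k * KD \<alpha> n (sg N k) x \<xi>) *\<^sub>R f \<xi>)" by (rule sum.swap)
    also have "... = (\<Sum>\<xi>\<in>cube n. (\<Sum>k<N. Dl N k * KD \<alpha> n (sg N k) x \<xi>) *\<^sub>R f \<xi>)" by (simp add: scaleR_sum_left)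
    finally show ?thesis .
  qed
  have "(\<lambda>N. \<Sum>\<xi>\<in>cube n. (\<Sum>k<N. Dl N k * KD \<alpha> n (sg N k) x \<xi>) *\<^sub>R f \<xi>)
      \<longlonglongrightarrow> (\<Sum>\<xi>\<in>cube n. (KK \<alpha> n 1 x \<xi> - KK \<alpha> n 0 x \<xi>) *\<^sub>R f \<xi>)"
    by (intro tendsto_sum tendsto_scaleR tendsto_const riemann KK_deriv KD_cont)
  also have "(\<Sum>\<xi>\<in>cube n. (KK \<alpha> n 1 x \<xi> - KK \<alpha> n 0 x \<xi>) *\<^sub>R f \<xi>)
      = (\<Sum>\<xi>\<in>cube n. (if x = \<xi> then 1 else 0) *\<^sub>R f \<xi>) - (\<Sum>\<xi>\<in>cube n. mu \<alpha> n \<xi> *\<^sub>R f \<xi>)"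
    unfolding KK_0 by (simp add: scaleR_diff_left sum_subtractf KK_1[OF x] cong: sum.cong)
  also have "... = f x - mu_int \<alpha> n f"
  proof -
    have "(\<Sum>\<xi>\<in>cube n. (if x = \<xi> then 1 else 0) *\<^sub>R f \<xi>) = f x"
    proof -
      have "(\<Sum>\<xi>\<in>cube n. (if x = \<xi> then 1 else 0) *\<^sub>R f \<xi>) = (if x = x then 1 else 0) *\<^sub>R f x + (\<Sum>\<xi>\<in>cube n - {x}. (if x = \<xi> then 1 else 0) *\<^sub>R f \<xi>)"
        by (rule sum.remove[OF cube_finite x])
      also have "(\<Sum>\<xi>\<in>cube n - {x}. (if x = \<xi> then 1 else 0) *\<^sub>R f \<xi>) = 0" by (rule sum.neutral) auto
      finally show ?thesis by simp
    qed
    then show ?thesis unfolding mu_int_def by simp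
  qed
  finally show ?thesis unfolding eq .
qed

lemma main_T:
  fixes f :: "(nat \<Rightarrow> real) \<Rightarrow> 'a::real_normed_vector"
  assumes p: "1 \<le> p" "p \<le> 2" and T: "T \<in> rad_type_consts TYPE('a) p" and Tpos: "0 < T"
    and al: "\<forall>i<n. 0 < \<alpha> i \<and> \<alpha> i < 1"
  shows "(\<Sum>x\<in>cube n. mu \<alpha> n x * norm (f x - mu_int \<alpha> n f) powr p)
     \<le> (2 * pi * T) powr p * (\<Sum>i<n. \<Sum>x\<in>cube n. mu \<alpha> n x * norm (partial i (\<alpha> i) f x) powr p)"
proof -
  define S where "S = (\<Sum>i<n. \<Sum>x\<in>cube n. mu \<alpha> n x * norm (partial i (\<alpha> i) f x) powr p)"
  have mu_nn: "mu \<alpha> n x \<ge> 0" for x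
    unfolding mu_eq using mm_props al by (intro prod_nonneg) (auto intro: less_imp_le)
  have S0: "S \<ge> 0" unfolding S_def using mu_nn by (intro sum_nonneg mult_nonneg_nonneg) auto
  define R where "R N x = (\<Sum>k<N. Dl N k *\<^sub>R GG \<alpha> n f (sg N k) x)" for N x
  have bnd: "(\<Sum>x\<in>cube n. mu \<alpha> n x * norm (R N x) powr p) \<le> (2 * pi * T) powr p * S" if N: "N \<ge> 1" for N
  proof -
    have N0: "0 < N" using N by simp
    define c where "c = 2 * T * (2 * sin (pi / (2 * real N)))"
    have sinpos: "0 < sin (pi / (2 * real N))" using angle_facts[OF N0 N0] by (intro sin_gt_zero) auto
    have c0: "0 < c" unfolding c_def using Tpos sinpos by simp
    have "(\<Sum>x\<in>cube n. mu \<alpha> n x * norm (R N x) powr p) \<le> (\<Sum>k<N. c) powr p * S"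
      unfolding R_def
    proof (rule minkowski)
      show "\<forall>k\<in>{..<N}. (\<Sum>x\<in>cube n. mu \<alpha> n x * norm (Dl N k *\<^sub>R GG \<alpha> n f (sg N k) x) powr p) \<le> c powr p * S"
      proof
        fix k assume "k \<in> {..<N}"
        then have k: "k < N" by simp
        have D: "Dl N k > 0" by (rule Dl_pos[OF N0 k])
        define H where "H = 1 / sqrt (sg N k * (1 - sg N k))"
        have H: "H \<ge> 0" unfolding H_def using sg_bounds[OF N0 k] by simp
        have "(\<Sum>x\<in>cube n. mu \<alpha> n x * norm (Dl N k *\<^sub>R GG \<alpha> n f (sg N k) x) powr p)
            = Dl N k powr p * (\<Sum>x\<in>cube n. mu \<alpha> n x * norm (GG \<alpha> n f (sg N k) x) powr p)"
          using D by (simp add: powr_mult sum_distrib_left mult_ac)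
        also have "... \<le> Dl N k powr p * ((2 * T * H) powr p * S)"
          unfolding H_def S_def using main_est[OF p T al sg_bounds[OF N0 k]] by (intro mult_left_mono) auto
        also have "... = (Dl N k * (2 * T * H)) powr p * S"
          using D Tpos H by (simp add: powr_mult)
        also have "Dl N k * (2 * T * H) = c"
        proof -
          have dh: "Dl N k * H = 2 * sin (pi / (2 * real N))" unfolding H_def by (rule Dl_H[OF N0 k])
          have "Dl N k * (2 * T * H) = 2 * T * (Dl N k * H)" by (simp add: mult_ac)
          also have "... = c" unfolding dh c_def ..
          finally show ?thesis .
        qed
        finally show "(\<Sum>x\<in>cube n. mu \<alpha> n x * norm (Dl N k *\<^sub>R GG \<alpha> n f (sg N k) x) powr p) \<le> c powr p * S" .
      qed
    qed (use p mu_nn c0 S0 in auto)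
    also have "... \<le> (2 * pi * T) powr p * S"
    proof (rule mult_right_mono[OF _ S0], rule powr_mono2)
      have "(\<Sum>k<N. c) = real N * c" by simp
      also have "... \<le> real N * (2 * T * (2 * (pi / (2 * real N))))"
        unfolding c_def using Tpos angle_facts[OF N0 N0]
        by (intro mult_left_mono) (auto simp: sin_x_le_x)
      also have "... = 2 * pi * T" using N0 by (simp add: field_simps)
      finally show "(\<Sum>k<N. c) \<le> 2 * pi * T" .
    qed (use p c0 in \<open>auto intro: sum_nonneg less_imp_le\<close>)
    finally show ?thesis .
  qed
  have lim: "(\<lambda>N. \<Sum>x\<in>cube n. mu \<alpha> n x * norm (R N x) powr p)
      \<longlonglongrightarrow> (\<Sum>x\<in>cube n. mu \<alpha> n x * norm (f x - mu_int \<alpha> n f) powr p)"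
  proof (intro tendsto_sum tendsto_mult_left)
    fix x assume x: "x \<in> cube n"
    have "(\<lambda>N. norm (R N x)) \<longlonglongrightarrow> norm (f x - mu_int \<alpha> n f)"
      unfolding R_def by (intro tendsto_norm R_lim x)
    then show "(\<lambda>N. norm (R N x) powr p) \<longlonglongrightarrow> norm (f x - mu_int \<alpha> n f) powr p"
      using p by (intro tendsto_powr') auto
  qed
  show ?thesis unfolding S_def[symmetric]
    by (rule LIMSEQ_le_const2[OF lim]) (use bnd in auto)
qed

theorem theorem3p3:
  fixes p :: real and n :: nat and \<alpha> :: "nat \<Rightarrow> real"
    and f :: "(nat \<Rightarrow> real) \<Rightarrow> 'a::real_normed_vector"
  assumes "1 \<le> p" and "p \<le> 2"
    and "has_rad_type TYPE('a) p"
    and "\<forall>i<n. 0 < \<alpha> i \<and> \<alpha> i < 1"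
  shows "(\<Sum>x\<in>cube n. mu \<alpha> n x * norm (f x - mu_int \<alpha> n f) powr p)
     \<le> (2 * pi * rad_type_const TYPE('a) p) powr p *
        (\<Sum>i<n. \<Sum>x\<in>cube n. mu \<alpha> n x * norm (partial i (\<alpha> i) f x) powr p)"
proof -
  define St where "St = rad_type_consts TYPE('a) p"
  define S where "S = (\<Sum>i<n. \<Sum>x\<in>cube n. mu \<alpha> n x * norm (partial i (\<alpha> i) f x) powr p)"
  define L where "L = (\<Sum>x\<in>cube n. mu \<alpha> n x * norm (f x - mu_int \<alpha> n f) powr p)"
  have ne: "St \<noteq> {}" using assms(3) unfolding has_rad_type_def St_def by auto
  have ge0: "\<And>T. T \<in> St \<Longrightarrow> 0 \<le> T" unfolding St_def rad_type_consts_def by auto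
  have up: "T' \<in> St" if T: "T \<in> St" and TT: "T \<le> T'" for T T'
  proof -
    have T0: "0 \<le> T" using ge0[OF T] .
    have "(\<Sum>x\<in>cube m. norm (\<Sum>i<m. x i *\<^sub>R v i) powr p) / 2 ^ m \<le> T' powr p * (\<Sum>i<m. norm (v i) powr p)"
      for m and v :: "nat \<Rightarrow> 'a"
    proof -
      have "(\<Sum>x\<in>cube m. norm (\<Sum>i<m. x i *\<^sub>R v i) powr p) / 2 ^ m \<le> T powr p * (\<Sum>i<m. norm (v i) powr p)"
        using T unfolding St_def rad_type_consts_def by blast
      also have "... \<le> T' powr p * (\<Sum>i<m. norm (v i) powr p)"
        using T0 TT assms(1) by (intro mult_right_mono powr_mono2 sum_nonneg) auto
      finally show ?thesis .
    qed
    then show ?thesis using T0 TT unfolding St_def rad_type_consts_def by auto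
  qed
  define T0 where "T0 = rad_type_const TYPE('a) p"
  have T0I: "T0 = Inf St" unfolding T0_def St_def rad_type_const_def by simp
  have T0pos: "T0 \<ge> 0" unfolding T0I using ne ge0 by (intro cInf_greatest) auto
  have bd: "L \<le> (2 * pi * (T0 + e)) powr p * S" if e: "e > 0" for e
  proof -
    have "Inf St < T0 + e" using e T0I by simp
    then obtain T where T: "T \<in> St" "T < T0 + e" using cInf_lessD[OF ne] by blast
    then have "T0 + e \<in> St" using up by auto
    then show ?thesis unfolding L_def S_def St_def
      using main_T[OF assms(1,2) _ _ assms(4), of "T0 + e" f] T0pos e by auto
  qed
  have lim: "((\<lambda>e. (2 * pi * (T0 + e)) powr p * S) \<longlongrightarrow> (2 * pi * (T0 + 0)) powr p * S) (at_right 0)"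
  proof (intro tendsto_mult_right tendsto_powr')
    show "((\<lambda>e. 2 * pi * (T0 + e)) \<longlongrightarrow> 2 * pi * (T0 + 0)) (at_right 0)"
      by (intro tendsto_intros)
    show "((\<lambda>e. p) \<longlongrightarrow> p) (at_right 0)" by simp
    have "eventually (\<lambda>e. 0 < e) (at_right (0::real))" by (rule eventually_at_right_less)
    then have "eventually (\<lambda>e. 2 * pi * (T0 + e) \<ge> 0) (at_right (0::real))"
      by eventually_elim (use T0pos in simp)
    then show "2 * pi * (T0 + 0) \<noteq> 0 \<or> 0 < p \<and> (\<forall>\<^sub>F e in at_right 0. 0 \<le> 2 * pi * (T0 + e))"
      using assms(1) by auto
  qed
  have "L \<le> (2 * pi * (T0 + 0)) powr p * S"
  proof (rule tendsto_lowerbound[OF lim])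
    have "eventually (\<lambda>e. 0 < e) (at_right (0::real))" by (rule eventually_at_right_less)
    then show "\<forall>\<^sub>F e in at_right 0. L \<le> (2 * pi * (T0 + e)) powr p * S"
      by eventually_elim (rule bd)
  qed simp
  then show ?thesis unfolding L_def S_def T0_def by simp
qed

end
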